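(* Let $\mathbf{x}$ be generated by an additive noise model $x_i=f_i(\mathbf{x}_{\mathrm{pa}(i)})+\epsilon_i$ over a DAG $\mathcal{G}$ with mutually independent $\epsilon_i\sim\mathcal{N}(0,\sigma^2)$, $\sigma^2>0$, and $f_i$ twice continuously differentiable, with all expectations below finite. Let $H(\mathbf{x})=-\nabla^2_{\mathbf{x}}\log p(\mathbf{x})$, let $l$ be a sink (leaf) node of $\mathcal{G}$, and for a symmetric matrix $M$ indexed by $\{1,\dots,d\}$ with $M_{ll}\neq 0$ let $\mathrm{Schur}(M)=M_{\setminus l,\setminus l}-M_{\setminus l,l}M_{ll}^{-1}M_{l,\setminus l}$. Then $$\Delta := \mathbb{E}[\mathrm{Schur}(H(\mathbf{x}))] - \mathrm{Schur}(\mathbb{E}[H(\mathbf{x})]) = -\frac{1}{\sigma^2}\,\mathrm{Cov}_{p(\mathbf{x})}\!\left(\nabla_{\mathbf{x}_{\setminus l}} f_l(\mathbf{x}_{\mathrm{pa}(l)})\right).$$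
   Context: $\mathrm{pa}(i)$ denotes the parents of node $i$ in $\mathcal{G}$; $p$ is the joint density of $\mathbf{x}$. $M_{\setminus l,\setminus l}$ is the submatrix with row and column $l$ removed, $M_{\setminus l,l}$ the $l$-th column with entry $l$ removed, $M_{l,\setminus l}$ the $l$-th row with entry $l$ removed. $\nabla_{\mathbf{x}_{\setminus l}} f_l$ is the gradient of $f_l$ (viewed as a function of $\mathbf{x}_{\setminus l}$) and $\mathrm{Cov}$ its covariance matrix under $p$. *)

theory Defs
  imports "HOL-Analysis.Analysis" "HOL-Probability.Probability"
begin

definition pd :: "(real ^ 'n \<Rightarrow> real) \<Rightarrow> 'n \<Rightarrow> real ^ 'n \<Rightarrow> real" where
  "pd g j x = frechet_derivative g (at x) (axis j 1)"

definition hess :: "(real ^ 'n \<Rightarrow> real) \<Rightarrow> real ^ 'n \<Rightarrow> 'n \<Rightarrow> 'n \<Rightarrow> real" where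
  "hess g x j k = pd (\<lambda>y. pd g k y) j x"

definition C2 :: "(real ^ 'n \<Rightarrow> real) \<Rightarrow> bool" where
  "C2 g \<longleftrightarrow> (\<forall>x. g differentiable (at x))
     \<and> (\<forall>j x. (pd g j) differentiable (at x))
     \<and> (\<forall>j. continuous_on UNIV (pd g j))
     \<and> (\<forall>j k. continuous_on UNIV (pd (pd g j) k))"

text \<open>Schur complement of the (l,l) entry of a matrix M indexed by 'n; only the
  entries with indices j,k different from l are meaningful.\<close>
definition schur :: "'n \<Rightarrow> ('n \<Rightarrow> 'n \<Rightarrow> real) \<Rightarrow> 'n \<Rightarrow> 'n \<Rightarrow> real" where
  "schur l M j k = M j k - M j l * inverse (M l l) * M l k"

definition depends_only_on :: "(real ^ 'n \<Rightarrow> real) \<Rightarrow> 'n set \<Rightarrow> bool" where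
  "depends_only_on g S \<longleftrightarrow> (\<forall>x y. (\<forall>j\<in>S. x $ j = y $ j) \<longrightarrow> g x = g y)"

definition dag_edges :: "('n \<Rightarrow> 'n set) \<Rightarrow> ('n \<times> 'n) set" where
  "dag_edges pa = {(j, i). j \<in> pa i}"

end

theory Submission
  imports Defs
begin


lemma measurable_vec_comp:
  fixes g :: "'a \<Rightarrow> real ^ 'n::finite"
  assumes "\<And>i. (\<lambda>x. g x $ i) \<in> borel_measurable M"
  shows "g \<in> borel_measurable M"
proof -
  have "(\<lambda>x. g x \<bullet> b) \<in> borel_measurable M" if "b \<in> Basis" for b
  proof -
    from that obtain i where "b = axis i 1" by (auto simp: Basis_vec_def)
    then show ?thesis using assms[of i] by (simp add: cart_eq_inner_axis)
  qed
  then have "\<forall>b\<in>Basis. (\<lambda>x. g x \<bullet> b) \<in> borel_measurable M" by blast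
  then show ?thesis by (rule borel_measurable_euclidean_space[THEN iffD2])
qed

lemma vec_lambda_meas:
  "(\<lambda>x. vec_lambda x :: real^'n::finite) \<in> borel_measurable (PiM UNIV (\<lambda>_::'n. lborel :: real measure))"
proof (rule measurable_vec_comp)
  fix i :: 'n
  have "(\<lambda>x. x i) \<in> borel_measurable (PiM UNIV (\<lambda>_::'n. lborel :: real measure))"
    using measurable_component_singleton[of i UNIV "\<lambda>_. lborel :: real measure"] by simp
  then show "(\<lambda>x. vec_lambda x $ i) \<in> borel_measurable (PiM UNIV (\<lambda>_::'n. lborel :: real measure))"
    by simp
qed

lemma lborel_vec:
  "lborel = distr (PiM UNIV (\<lambda>_::'n::finite. lborel :: real measure)) borel (\<lambda>x. vec_lambda x :: real^'n)"
proof (rule lborel_eqI)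
  interpret product_sigma_finite "\<lambda>_::'n. lborel :: real measure"
    by (simp add: product_sigma_finite_def lborel.sigma_finite_measure_axioms)
  fix l u :: "real^'n" assume le: "\<And>b. b\<in>Basis \<Longrightarrow> l\<bullet>b \<le> u\<bullet>b"
  have le': "l$i \<le> u$i" for i using le[of "axis i 1"]
    by (auto simp: Basis_vec_def cart_eq_inner_axis)
  have pre: "(\<lambda>x. vec_lambda x :: real^'n) -` box l u \<inter> space (PiM UNIV (\<lambda>_::'n. lborel :: real measure))
     = PiE UNIV (\<lambda>i. {l$i<..<u$i})"
    by (auto simp: mem_box_cart space_PiM PiE_iff)
  have "emeasure (distr (PiM UNIV (\<lambda>_::'n. lborel :: real measure)) borel (\<lambda>x. vec_lambda x :: real^'n)) (box l u)
     = emeasure (PiM UNIV (\<lambda>_::'n. lborel :: real measure)) (PiE UNIV (\<lambda>i. {l$i<..<u$i}))"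
    by (subst emeasure_distr[OF vec_lambda_meas]) (auto simp: pre)
  also have "\<dots> = (\<Prod>i\<in>UNIV. emeasure lborel {l$i<..<u$i})"
    by (rule emeasure_PiM) auto
  also have "\<dots> = (\<Prod>i\<in>UNIV. ennreal (u$i - l$i))"
    using le' by simp
  also have "\<dots> = ennreal (\<Prod>i\<in>UNIV. u$i - l$i)"
    using le' by (simp add: prod_ennreal)
  also have "(\<Prod>i\<in>UNIV. u$i - l$i) = (\<Prod>b\<in>Basis. (u - l) \<bullet> b)"
    by (simp add: Basis_vec_def cart_eq_inner_axis axis_eq_axis prod.UNION_disjoint inner_diff_left)
  finally show "emeasure (distr (PiM UNIV (\<lambda>_::'n. lborel :: real measure)) borel (\<lambda>x. vec_lambda x :: real^'n)) (box l u) = (\<Prod>b\<in>Basis. (u - l) \<bullet> b)" .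
qed simp

abbreviation PI :: "('n::finite \<Rightarrow> real) measure" where
  "PI \<equiv> PiM UNIV (\<lambda>_::'n. lborel :: real measure)"

lemma space_PI[simp]: "space PI = UNIV"
  by (simp add: space_PiM)

lemma shear_preserving:
  fixes c :: "('n::finite \<Rightarrow> real) \<Rightarrow> real" and s :: 'n
  assumes cm[measurable]: "c \<in> borel_measurable PI"
    and cind: "\<And>x y. c (x(s := y)) = c x"
  shows "distr PI PI (\<lambda>x. x(s := x s + c x)) = PI"
proof -
  interpret product_sigma_finite "\<lambda>_::'n. lborel :: real measure"
    by (simp add: product_sigma_finite_def lborel.sigma_finite_measure_axioms)
  have shm[measurable]: "(\<lambda>x. x(s := x s + c x)) \<in> measurable PI PI"
    by (rule measurable_PiM_single') (auto split: if_splits)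
  have U: "(UNIV::'n set) = insert s (UNIV - {s})" by auto
  show ?thesis
  proof (rule measure_eqI)
    fix A assume A: "A \<in> sets (distr PI PI (\<lambda>x. x(s := x s + c x)))"
    then have A'[measurable]: "A \<in> sets PI" by simp
    have "emeasure (distr PI PI (\<lambda>x. x(s := x s + c x))) A
        = emeasure PI ((\<lambda>x. x(s := x s + c x)) -` A \<inter> space PI)"
      by (rule emeasure_distr) (use shm A' in auto)
    also have "\<dots> = (\<integral>\<^sup>+x. indicator ((\<lambda>x. x(s := x s + c x)) -` A \<inter> space PI) x \<partial>PI)"
      by (rule nn_integral_indicator[symmetric]) measurable
    also have "\<dots> = (\<integral>\<^sup>+x. indicator A (x(s := x s + c x)) \<partial>PI)"
      by (auto intro!: nn_integral_cong split: split_indicator)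
    also have "\<dots> = (\<integral>\<^sup>+x. (\<integral>\<^sup>+y. indicator A ((x(s:=y))(s := (x(s:=y)) s + c (x(s:=y)))) \<partial>lborel) \<partial>PiM (UNIV - {s}) (\<lambda>_. lborel))"
      by (subst U, subst product_nn_integral_insert) (auto simp flip: U)
    also have "\<dots> = (\<integral>\<^sup>+x. (\<integral>\<^sup>+y. indicator A (x(s:=y)) \<partial>lborel) \<partial>PiM (UNIV - {s}) (\<lambda>_. lborel))"
    proof (rule nn_integral_cong)
      fix x :: "'n \<Rightarrow> real"
      have um[measurable]: "(\<lambda>y. x(s:=y)) \<in> measurable borel PI"
        by (rule measurable_PiM_single') auto
      have m: "(\<lambda>y. indicator A (x(s:=y)) :: ennreal) \<in> borel_measurable borel"
        by measurable
      have "(\<integral>\<^sup>+y. indicator A (x(s:=y)) \<partial>lborel) = ennreal \<bar>1\<bar> * (\<integral>\<^sup>+y. indicator A (x(s:= c x + 1 * y)) \<partial>lborel)"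
        by (rule nn_integral_real_affine[OF m]) simp
      then show "(\<integral>\<^sup>+y. indicator A ((x(s:=y))(s := (x(s:=y)) s + c (x(s:=y)))) \<partial>lborel) = (\<integral>\<^sup>+y. indicator A (x(s:=y)) \<partial>lborel)"
        by (simp add: cind add.commute)
    qed
    also have "\<dots> = (\<integral>\<^sup>+x. indicator A x \<partial>PI)"
      by (subst (2) U, subst product_nn_integral_insert) (auto simp flip: U)
    also have "\<dots> = emeasure PI A" by simp
    finally show "emeasure (distr PI PI (\<lambda>x. x(s := x s + c x))) A = emeasure PI A" .
  qed simp
qed

definition Tf :: "('n::finite \<Rightarrow> real ^ 'n \<Rightarrow> real) \<Rightarrow> 'n set \<Rightarrow> ('n \<Rightarrow> real) \<Rightarrow> ('n \<Rightarrow> real)" where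
  "Tf f S x = (\<lambda>i. if i \<in> S then x i - f i (vec_lambda x) else x i)"

lemma sink_exists:
  fixes pa :: "'n::finite \<Rightarrow> 'n set"
  assumes "acyclic (dag_edges pa)" "S \<noteq> {}"
  shows "\<exists>s\<in>S. \<forall>i\<in>S. s \<notin> pa i"
proof -
  have "finite (dag_edges pa)" by (rule finite_subset[of _ UNIV]) auto
  then have "wf ((dag_edges pa)\<inverse>)" using assms(1) by (rule finite_acyclic_wf_converse)
  then obtain z where "z \<in> S" "\<And>y. (y, z) \<in> (dag_edges pa)\<inverse> \<Longrightarrow> y \<notin> S"
    using assms(2) unfolding wf_eq_minimal by blast
  then show ?thesis by (auto simp: dag_edges_def)
qed

lemma not_self_parent:
  assumes "acyclic (dag_edges pa)" shows "s \<notin> pa s"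
proof
  assume "s \<in> pa s"
  then have "(s, s) \<in> (dag_edges pa)\<^sup>+" by (auto simp: dag_edges_def)
  with assms show False by (auto simp: acyclic_def)
qed

lemma Tf_props:
  fixes f :: "'n::finite \<Rightarrow> real ^ 'n \<Rightarrow> real" and pa :: "'n \<Rightarrow> 'n set"
  assumes dag: "acyclic (dag_edges pa)"
    and dep: "\<And>i. depends_only_on (f i) (pa i)"
    and fm[measurable]: "\<And>i. f i \<in> borel_measurable borel"
  shows "Tf f S \<in> measurable PI PI \<and> distr PI PI (Tf f S) = PI \<and> (\<exists>U \<in> measurable PI PI. \<forall>x. U (Tf f S x) = x)"
proof -
  have fvm[measurable]: "(\<lambda>x. f i (vec_lambda x)) \<in> borel_measurable PI" for i
    by (rule measurable_compose[OF vec_lambda_meas]) simp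
  have Tm: "Tf f S \<in> measurable PI PI" for S
    unfolding Tf_def by (rule measurable_PiM_single') auto
  have "finite S" by simp
  then show ?thesis
  proof (induction S rule: finite_psubset_induct)
    case (psubset S)
    show ?case
    proof (cases "S = {}")
      case True
      then have "Tf f S = (\<lambda>x. x)" by (auto simp: Tf_def)
      then show ?thesis using Tm by (auto intro!: bexI[of _ "\<lambda>x. x"] simp: distr_id2)
    next
      case False
      obtain s where s: "s \<in> S" "\<And>i. i \<in> S \<Longrightarrow> s \<notin> pa i"
        using sink_exists[OF dag False] by blast
      have sps: "s \<notin> pa s" by (rule not_self_parent[OF dag])
      have upd: "f i (vec_lambda (x(s := y))) = f i (vec_lambda x)" if "s \<notin> pa i" for i x y
        using dep[of i] that unfolding depends_only_on_def by auto
      define c where "c x = - f s (vec_lambda x)" for x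
      have cm[measurable]: "c \<in> borel_measurable PI" unfolding c_def by measurable
      have cind: "c (x(s := y)) = c x" for x y unfolding c_def using upd[OF sps] by simp
      define Sh where "Sh x = x(s := x s + c x)" for x
      have Shm: "Sh \<in> measurable PI PI"
        unfolding Sh_def by (rule measurable_PiM_single') (auto split: if_splits simp: cm)
      have Shd: "distr PI PI Sh = PI" unfolding Sh_def by (rule shear_preserving[OF cm cind])
      have comp: "Tf f S x = Tf f (S - {s}) (Sh x)" for x
      proof
        fix i show "Tf f S x i = Tf f (S - {s}) (Sh x) i"
        proof (cases "i = s")
          case True then show ?thesis using s by (simp add: Tf_def Sh_def c_def)
        next
          case False
          have "f i (vec_lambda (Sh x)) = f i (vec_lambda x)" if "i \<in> S"
            unfolding Sh_def using upd[OF s(2)[OF that]] by simp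
          then show ?thesis using False by (auto simp: Tf_def Sh_def)
        qed
      qed
      have IH: "distr PI PI (Tf f (S - {s})) = PI" "\<exists>U \<in> measurable PI PI. \<forall>x. U (Tf f (S - {s}) x) = x"
        using psubset.IH[of "S - {s}"] s by auto
      obtain U where U: "U \<in> measurable PI PI" "\<And>x. U (Tf f (S - {s}) x) = x" using IH(2) by blast
      define Ush where "Ush y = y(s := y s - c y)" for y
      have Ushm: "Ush \<in> measurable PI PI"
        unfolding Ush_def by (rule measurable_PiM_single') (auto split: if_splits simp: cm)
      have inv: "Ush (Sh x) = x" for x
        unfolding Ush_def Sh_def using cind[of x "x s + c x"] by auto
      have eqf: "Tf f S = Tf f (S - {s}) \<circ> Sh" using comp by auto
      have "distr PI PI (Tf f S) = distr (distr PI PI Sh) PI (Tf f (S - {s}))"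
        unfolding eqf by (rule distr_distr[symmetric, OF Tm Shm])
      also have "\<dots> = PI" using Shd IH(1) by simp
      finally have D: "distr PI PI (Tf f S) = PI" .
      have "\<forall>x. (Ush \<circ> U) (Tf f S x) = x" using comp U(2) inv by simp
      moreover have "Ush \<circ> U \<in> measurable PI PI" using U(1) Ushm by (rule measurable_comp)
      ultimately show ?thesis using Tm D by blast
    qed
  qed
qed



lemma indicator_PiE_UNIV:
  fixes x :: "'n::finite \<Rightarrow> 'b"
  shows "(\<Prod>i\<in>UNIV. indicator (A i) (x i) :: ennreal) = indicator (PiE UNIV A) x"
proof (cases "\<forall>i. x i \<in> A i")
  case True then show ?thesis by (simp add: PiE_iff indicator_def)
next
  case False
  then obtain j where "x j \<notin> A j" by blast
  then have "(\<Prod>i\<in>UNIV. indicator (A i) (x i) :: ennreal) = 0"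
    using \<open>x j \<notin> A j\<close> by (intro prod_zero) (auto intro!: exI[of _ j])
  then show ?thesis using False by (auto simp: PiE_iff indicator_def)
qed

lemma eps_joint:
  fixes eps :: "'n::finite \<Rightarrow> 'a \<Rightarrow> real" and g :: "real \<Rightarrow> real"
  assumes prob: "prob_space M"
    and dist: "\<And>i. distributed M lborel (eps i) (\<lambda>t. ennreal (g t))"
    and indep: "prob_space.indep_vars M (\<lambda>_. borel) eps UNIV"
  shows "distr M PI (\<lambda>\<omega> i. eps i \<omega>) = density PI (\<lambda>x. \<Prod>i\<in>UNIV. ennreal (g (x i)))"
proof -
  interpret P: prob_space M by (rule prob)
  have rv[measurable]: "eps i \<in> borel_measurable M" for i
    using dist[of i] by (simp add: distributed_def)
  have gm[measurable]: "(\<lambda>t. ennreal (g t)) \<in> borel_measurable borel"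
    using dist[of undefined] by (simp add: distributed_def)
  have dd: "distr M borel (eps i) = density lborel (\<lambda>t. ennreal (g t))" for i
  proof -
    have "distr M borel (eps i) = distr M lborel (eps i)" by (rule distr_cong) auto
    then show ?thesis using dist[of i] by (simp add: distributed_def)
  qed
  have j: "distr M (PiM UNIV (\<lambda>_. borel)) (\<lambda>x. \<lambda>i\<in>UNIV. eps i x) = PiM UNIV (\<lambda>i. distr M borel (eps i))"
    using P.indep_vars_iff_distr_eq_PiM[where I=UNIV and M'="\<lambda>_. borel" and X=eps] indep by auto
  have "distr M PI (\<lambda>\<omega> i. eps i \<omega>) = distr M (PiM UNIV (\<lambda>_. borel)) (\<lambda>x. \<lambda>i\<in>UNIV. eps i x)"
    by (rule distr_cong) (auto intro!: sets_PiM_cong)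
  also have "\<dots> = PiM UNIV (\<lambda>i. distr M borel (eps i))" by (rule j)
  also have "\<dots> = density PI (\<lambda>x. \<Prod>i\<in>UNIV. ennreal (g (x i)))"
  proof (rule sym)
    interpret PS: product_sigma_finite "\<lambda>i. distr M borel (eps i)"
      unfolding product_sigma_finite_def
      by (auto intro!: prob_space_imp_sigma_finite P.prob_space_distr)
    interpret L: product_sigma_finite "\<lambda>_::'n. lborel :: real measure"
      by (simp add: product_sigma_finite_def lborel.sigma_finite_measure_axioms)
    show "density PI (\<lambda>x. \<Prod>i\<in>UNIV. ennreal (g (x i))) = PiM UNIV (\<lambda>i. distr M borel (eps i))"
    proof (rule PS.PiM_eqI)
      show "sets (density PI (\<lambda>x. \<Prod>i\<in>UNIV. ennreal (g (x i)))) = sets (PiM UNIV (\<lambda>i. distr M borel (eps i)))"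
        by (auto intro!: sets_PiM_cong)
    next
      fix A assume A: "\<And>i. i \<in> UNIV \<Longrightarrow> A i \<in> sets (distr M borel (eps i))"
      then have A'[measurable]: "A i \<in> sets borel" for i by auto
      have PA: "PiE UNIV A \<in> sets PI" by (rule sets_PiM_I_finite) auto
      have "emeasure (density PI (\<lambda>x. \<Prod>i\<in>UNIV. ennreal (g (x i)))) (PiE UNIV A)
          = (\<integral>\<^sup>+x. (\<Prod>i\<in>UNIV. ennreal (g (x i))) * indicator (PiE UNIV A) x \<partial>PI)"
        by (rule emeasure_density[OF _ PA]) measurable
      also have "\<dots> = (\<integral>\<^sup>+x. (\<Prod>i\<in>UNIV. ennreal (g (x i)) * indicator (A i) (x i)) \<partial>PI)"
        by (simp add: prod.distrib indicator_PiE_UNIV)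
      also have "\<dots> = (\<Prod>i\<in>UNIV. \<integral>\<^sup>+y. ennreal (g y) * indicator (A i) y \<partial>lborel)"
        by (rule L.product_nn_integral_prod) auto
      also have "\<dots> = (\<Prod>i\<in>UNIV. emeasure (distr M borel (eps i)) (A i))"
        by (simp add: dd emeasure_density)
      finally show "emeasure (density PI (\<lambda>x. \<Prod>i\<in>UNIV. ennreal (g (x i)))) (PiE UNIV A) = (\<Prod>i\<in>UNIV. emeasure (distr M borel (eps i)) (A i))" .
    qed simp
  qed
  finally show ?thesis .
qed



lemma X_density:
  fixes M :: "'a measure" and pa :: "'n::finite \<Rightarrow> 'n set"
    and f :: "'n \<Rightarrow> real ^ 'n \<Rightarrow> real" and eps :: "'n \<Rightarrow> 'a \<Rightarrow> real"
    and X :: "'a \<Rightarrow> real ^ 'n" and g :: "real \<Rightarrow> real"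
  assumes prob: "prob_space M"
    and dag: "acyclic (dag_edges pa)"
    and dep: "\<And>i. depends_only_on (f i) (pa i)"
    and fm[measurable]: "\<And>i. f i \<in> borel_measurable borel"
    and dist: "\<And>i. distributed M lborel (eps i) (\<lambda>t. ennreal (g t))"
    and indep: "prob_space.indep_vars M (\<lambda>_. borel) eps UNIV"
    and Xm[measurable]: "X \<in> borel_measurable M"
    and anm: "\<And>\<omega> i. \<omega> \<in> space M \<Longrightarrow> X \<omega> $ i = f i (X \<omega>) + eps i \<omega>"
  shows "distr M lborel X = density lborel (\<lambda>v. \<Prod>i\<in>UNIV. ennreal (g (v$i - f i v)))"
proof -
  have gm[measurable]: "(\<lambda>t. ennreal (g t)) \<in> borel_measurable borel"
    using dist[of undefined] by (simp add: distributed_def)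
  define \<rho> where "\<rho> x = (\<Prod>i\<in>UNIV. ennreal (g (x i)))" for x :: "'n \<Rightarrow> real"
  have \<rho>m[measurable]: "\<rho> \<in> borel_measurable PI" unfolding \<rho>_def by measurable
  have fvm[measurable]: "(\<lambda>x. f i (vec_lambda x)) \<in> borel_measurable PI" for i
    by (rule measurable_compose[OF vec_lambda_meas]) simp
  have qm: "(\<lambda>v::real^'n. \<Prod>i\<in>UNIV. ennreal (g (v$i - f i v))) \<in> borel_measurable borel"
    by measurable
  define T where "T = Tf f UNIV"
  obtain U where Tm[measurable]: "T \<in> measurable PI PI" and TD: "distr PI PI T = PI"
    and Um[measurable]: "U \<in> measurable PI PI" and UT: "\<And>x. U (T x) = x"
    using Tf_props[OF dag dep fm, of UNIV] unfolding T_def by blast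
  define Y where "Y \<omega> = (\<lambda>i. X \<omega> $ i)" for \<omega>
  have Ym[measurable]: "Y \<in> measurable M PI"
    unfolding Y_def by (rule measurable_PiM_single') (auto intro: measurable_compose[OF Xm borel_measurable_nth])
  have TY: "T (Y \<omega>) = (\<lambda>i. eps i \<omega>)" if "\<omega> \<in> space M" for \<omega>
  proof -
    have v: "vec_lambda (Y \<omega>) = X \<omega>" by (simp add: Y_def vec_nth_inverse)
    show ?thesis unfolding T_def Tf_def v using anm[OF that] by (simp add: Y_def)
  qed
  have E: "distr M PI (\<lambda>\<omega> i. eps i \<omega>) = density PI \<rho>"
    unfolding \<rho>_def by (rule eps_joint[OF prob dist indep])
  have "distr M PI Y = distr M PI (\<lambda>\<omega>. U (T (Y \<omega>)))" by (simp add: UT)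
  also have "\<dots> = distr (distr M PI (\<lambda>\<omega>. T (Y \<omega>))) PI U"
    by (subst distr_distr) (auto simp: comp_def)
  also have "distr M PI (\<lambda>\<omega>. T (Y \<omega>)) = density PI \<rho>"
    using E by (subst distr_cong[OF refl refl TY]) auto
  finally have nu1: "distr M PI Y = distr (density PI \<rho>) PI U" .
  have "density PI (\<lambda>x. \<rho> (T x)) = distr (density PI (\<lambda>x. \<rho> (T x))) PI (\<lambda>x. U (T x))"
    by (simp add: UT distr_id2)
  also have "\<dots> = distr (distr (density PI (\<lambda>x. \<rho> (T x))) PI T) PI U"
    by (subst distr_distr) (auto simp: comp_def)
  also have "distr (density PI (\<lambda>x. \<rho> (T x))) PI T = density (distr PI PI T) \<rho>"
    by (rule density_distr[symmetric]) auto
  also have "\<dots> = density PI \<rho>" by (simp add: TD)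
  finally have nu: "distr M PI Y = density PI (\<lambda>x. \<rho> (T x))" using nu1 by simp
  have "distr M lborel X = distr M borel (\<lambda>\<omega>. vec_lambda (Y \<omega>))"
    by (rule distr_cong) (auto simp: Y_def vec_nth_inverse)
  also have "\<dots> = distr (distr M PI Y) borel vec_lambda"
    by (subst distr_distr) (auto simp: comp_def intro: vec_lambda_meas)
  also have "\<dots> = distr (density PI (\<lambda>x. \<rho> (T x))) borel vec_lambda" by (simp add: nu)
  also have "\<dots> = distr (density PI (\<lambda>x. (\<lambda>v. \<Prod>i\<in>UNIV. ennreal (g (v$i - f i v))) (vec_lambda x))) borel vec_lambda"
    apply (rule arg_cong[where f="\<lambda>N. distr N borel vec_lambda"], rule density_cong)
    subgoal by measurable
    subgoal by (rule measurable_compose[OF vec_lambda_meas qm])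
    subgoal by (auto simp: \<rho>_def T_def Tf_def)
    done
  also have "\<dots> = density (distr PI borel vec_lambda) (\<lambda>v. \<Prod>i\<in>UNIV. ennreal (g (v$i - f i v)))"
    by (rule density_distr[OF qm vec_lambda_meas, symmetric])
  also have "distr PI borel vec_lambda = (lborel :: (real^'n) measure)"
    by (rule lborel_vec[symmetric])
  finally show ?thesis .
qed



lemma pd_line:
  fixes g :: "real^'n::finite \<Rightarrow> real"
  assumes "g differentiable (at y)"
  shows "((\<lambda>t. g (y + t *\<^sub>R axis k 1)) has_real_derivative pd g k y) (at 0)"
proof -
  let ?D = "frechet_derivative g (at y)"
  have gd: "(g has_derivative ?D) (at y)" using assms frechet_derivative_works by blast
  have ld: "((\<lambda>t::real. y + t *\<^sub>R axis k 1) has_derivative (\<lambda>t. t *\<^sub>R axis k 1)) (at 0)"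
    by (auto intro!: derivative_eq_intros)
  have gd0: "(g has_derivative ?D) (at ((\<lambda>t::real. y + t *\<^sub>R axis k 1) 0))" using gd by simp
  have "((\<lambda>t. g (y + t *\<^sub>R axis k 1)) has_derivative (\<lambda>t. ?D (t *\<^sub>R axis k 1))) (at 0)"
    using diff_chain_at[OF ld gd0] by (simp add: o_def)
  moreover have "(\<lambda>t. ?D (t *\<^sub>R axis k 1)) = (\<lambda>t. pd g k y * t)"
  proof
    fix t
    have "linear ?D" using gd has_derivative_linear by blast
    then show "?D (t *\<^sub>R axis k 1) = pd g k y * t" by (simp add: pd_def linear_scale)
  qed
  ultimately show ?thesis by (simp add: has_field_derivative_def)
qed

lemma pd_eq:
  fixes g :: "real^'n::finite \<Rightarrow> real"
  assumes "g differentiable (at y)" "((\<lambda>t. g (y + t *\<^sub>R axis k 1)) has_real_derivative D) (at 0)"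
  shows "pd g k y = D"
  using DERIV_unique pd_line[OF assms(1)] assms(2) by blast

lemma dep_shift:
  assumes "depends_only_on g S" "l \<notin> S"
  shows "g (x + t *\<^sub>R axis l 1) = g x"
proof -
  have "(x + t *\<^sub>R axis l 1) $ j = x $ j" if "j \<in> S" for j
    using that assms(2) by (auto simp: axis_def)
  then show ?thesis using assms(1) unfolding depends_only_on_def by blast
qed

lemma pd_shift:
  fixes g :: "real^'n::finite \<Rightarrow> real"
  assumes "depends_only_on g S" "l \<notin> S" "\<And>z. g differentiable (at z)"
  shows "pd g k (x + t *\<^sub>R axis l 1) = pd g k x"
proof (rule pd_eq[OF assms(3)])
  have "(\<lambda>s. g (x + t *\<^sub>R axis l 1 + s *\<^sub>R axis k 1)) = (\<lambda>s. g (x + s *\<^sub>R axis k 1))"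
  proof
    fix s
    have "g (x + t *\<^sub>R axis l 1 + s *\<^sub>R axis k 1) = g ((x + s *\<^sub>R axis k 1) + t *\<^sub>R axis l 1)"
      by (simp add: algebra_simps)
    also have "\<dots> = g (x + s *\<^sub>R axis k 1)" by (rule dep_shift[OF assms(1,2)])
    finally show "g (x + t *\<^sub>R axis l 1 + s *\<^sub>R axis k 1) = g (x + s *\<^sub>R axis k 1)" .
  qed
  then show "((\<lambda>s. g (x + t *\<^sub>R axis l 1 + s *\<^sub>R axis k 1)) has_real_derivative pd g k x) (at 0)"
    using pd_line[OF assms(3)] by simp
qed

lemma pd_zero:
  fixes g :: "real^'n::finite \<Rightarrow> real"
  assumes "depends_only_on g S" "l \<notin> S" "g differentiable (at x)"
  shows "pd g l x = 0"
proof (rule pd_eq[OF assms(3)])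
  show "((\<lambda>t. g (x + t *\<^sub>R axis l 1)) has_real_derivative 0) (at 0)"
    using dep_shift[OF assms(1,2)] by simp
qed

lemma comp_diff: "(\<lambda>y::real^'n::finite. y $ i) differentiable (at z)"
  by (rule bounded_linear_imp_differentiable[OF bounded_linear_vec_nth])

lemma line_comp: "((\<lambda>t. (y + t *\<^sub>R axis k 1) $ i) has_real_derivative (axis k 1 $ i)) (at 0)"
proof -
  have "(\<lambda>t. (y + t *\<^sub>R axis k 1) $ i) = (\<lambda>t. y $ i + t * (axis k 1 $ i))" by auto
  moreover have "((\<lambda>t. y $ i + t * (axis k 1 $ i)) has_real_derivative (axis k 1 $ i)) (at 0)"
    by (auto intro!: derivative_eq_intros)
  ultimately show ?thesis by simp
qed

lemma hess_vals:
  fixes f :: "'n::finite \<Rightarrow> real^'n \<Rightarrow> real" and \<sigma> K :: real and l :: 'n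
    and pa :: "'n \<Rightarrow> 'n set"
  assumes diff: "\<And>i z. f i differentiable (at z)"
    and diff2: "\<And>i k z. pd (f i) k differentiable (at z)"
    and dep: "\<And>i. depends_only_on (f i) (pa i)" and sink: "\<And>i. l \<notin> pa i"
    and sp: "\<sigma> > 0"
    and G: "G = (\<lambda>y. \<Sum>i\<in>UNIV. K - (y$i - f i y)^2 / (2*\<sigma>^2))"
  shows "hess G x l l = -1/\<sigma>^2"
    and "j \<noteq> l \<Longrightarrow> hess G x j l = pd (f l) j x / \<sigma>^2"
    and "k \<noteq> l \<Longrightarrow> hess G x l k = pd (f l) k x / \<sigma>^2"
proof -
  have s2: "\<sigma>^2 > 0" using sp by simp
  have Gd: "G differentiable (at y)" for y
    unfolding G using diff s2 by (auto simp: comp_diff)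
  define P where "P k y = (\<Sum>i\<in>UNIV. -((y$i - f i y) * (axis k 1 $ i - pd (f i) k y)) / \<sigma>^2)" for k y
  have ri: "((\<lambda>t. (y + t *\<^sub>R axis k 1)$i - f i (y + t *\<^sub>R axis k 1)) has_real_derivative (axis k 1 $ i - pd (f i) k y)) (at 0)" for i k y
    by (rule DERIV_diff[OF line_comp pd_line[OF diff]])
  have trm: "((\<lambda>t. K - ((y + t *\<^sub>R axis k 1)$i - f i (y + t *\<^sub>R axis k 1))^2 / (2*\<sigma>^2)) has_real_derivative
      (-((y$i - f i y) * (axis k 1 $ i - pd (f i) k y)) / \<sigma>^2)) (at 0)" for i k y
  proof -
    have "((\<lambda>t. ((y + t *\<^sub>R axis k 1)$i - f i (y + t *\<^sub>R axis k 1))^2) has_real_derivative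
        (of_nat 2 * (axis k 1 $ i - pd (f i) k y) * (y$i - f i y) ^ (2 - Suc 0))) (at 0)"
      using DERIV_power[OF ri[of y k i], of 2] by (simp add: algebra_simps)
    from DERIV_diff[OF DERIV_const[of K] DERIV_cdivide[OF this, of "2*\<sigma>^2"]]
    show ?thesis by (rule DERIV_cong) (use s2 in \<open>simp add: field_simps\<close>)
  qed
  have PG: "pd G k y = P k y" for k y
  proof (rule pd_eq[OF Gd])
    show "((\<lambda>t. G (y + t *\<^sub>R axis k 1)) has_real_derivative P k y) (at 0)"
      unfolding G P_def by (rule DERIV_sum) (rule trm)
  qed
  have fl0: "pd (f i) l y = 0" for i y by (rule pd_zero[OF dep sink diff])
  define Q where "Q y = -(y$l - f l y) / \<sigma>^2" for y
  have PQ: "(\<lambda>y. pd G l y) = Q"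
  proof
    fix y
    have "P l y = (\<Sum>i\<in>UNIV. (if i = l then -(y$l - f l y) / \<sigma>^2 else 0))"
      unfolding P_def by (rule sum.cong) (auto simp: fl0 axis_def diff_divide_distrib)
    then show "pd G l y = Q y" by (simp add: PG Q_def diff_divide_distrib)
  qed
  have Qd: "Q differentiable (at y)" for y
    unfolding Q_def using diff s2 by (auto simp: comp_diff)
  have Qline: "pd Q j x = -(axis j 1 $ l - pd (f l) j x) / \<sigma>^2" for j
  proof (rule pd_eq[OF Qd])
    show "((\<lambda>t. Q (x + t *\<^sub>R axis j 1)) has_real_derivative -(axis j 1 $ l - pd (f l) j x) / \<sigma>^2) (at 0)"
      unfolding Q_def using DERIV_cdivide[OF DERIV_minus[OF ri[of x j l]], of "\<sigma>^2"] by simp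
  qed
  show "hess G x l l = -1/\<sigma>^2"
    unfolding hess_def PQ Qline by (simp add: fl0 axis_def)
  show "j \<noteq> l \<Longrightarrow> hess G x j l = pd (f l) j x / \<sigma>^2"
    unfolding hess_def PQ Qline by (simp add: axis_def)
  assume kl: "k \<noteq> l"
  have Pd: "P k differentiable (at y)" for y
    unfolding P_def using diff diff2 s2 by (auto simp: comp_diff)
  have Pline: "(\<lambda>t. P k (x + t *\<^sub>R axis l 1)) = (\<lambda>t. \<Sum>i\<in>UNIV. -(((x + t *\<^sub>R axis l 1)$i - f i x) * (axis k 1 $ i - pd (f i) k x)) / \<sigma>^2)"
    unfolding P_def using dep_shift[OF dep sink] pd_shift[OF dep sink diff] by simp
  have "((\<lambda>t. P k (x + t *\<^sub>R axis l 1)) has_real_derivative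
      (\<Sum>i\<in>UNIV. -((axis l 1 $ i) * (axis k 1 $ i - pd (f i) k x)) / \<sigma>^2)) (at 0)"
    unfolding Pline
  proof (rule DERIV_sum)
    fix i
    have "((\<lambda>t. (x + t *\<^sub>R axis l 1)$i - f i x) has_real_derivative (axis l 1 $ i - 0)) (at 0)"
      by (rule DERIV_diff[OF line_comp DERIV_const])
    from DERIV_cdivide[OF DERIV_minus[OF DERIV_cmult_right[OF this, of "axis k 1 $ i - pd (f i) k x"]], of "\<sigma>^2"]
    show "((\<lambda>t. -(((x + t *\<^sub>R axis l 1)$i - f i x) * (axis k 1 $ i - pd (f i) k x)) / \<sigma>^2) has_real_derivative
      -((axis l 1 $ i) * (axis k 1 $ i - pd (f i) k x)) / \<sigma>^2) (at 0)" by simp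
  qed
  then have "pd (P k) l x = (\<Sum>i\<in>UNIV. -((axis l 1 $ i) * (axis k 1 $ i - pd (f i) k x)) / \<sigma>^2)"
    by (rule pd_eq[OF Pd])
  also have "\<dots> = (\<Sum>i\<in>UNIV. (if i = l then pd (f l) k x / \<sigma>^2 else 0))"
    by (rule sum.cong) (use kl in \<open>auto simp: axis_def\<close>)
  finally have "pd (P k) l x = pd (f l) k x / \<sigma>^2" by simp
  moreover have "(\<lambda>y. pd G k y) = P k" using PG by auto
  ultimately show "hess G x l k = pd (f l) k x / \<sigma>^2" unfolding hess_def by simp
qed



theorem proposition3p4:
  fixes M :: "'a measure"
    and pa :: "'n::finite \<Rightarrow> 'n set"
    and f :: "'n \<Rightarrow> real ^ 'n \<Rightarrow> real"
    and eps :: "'n \<Rightarrow> 'a \<Rightarrow> real"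
    and X :: "'a \<Rightarrow> real ^ 'n"
    and p :: "real ^ 'n \<Rightarrow> real"
    and \<sigma> :: real
    and l :: 'n
  assumes prob: "prob_space M"
    and dag: "acyclic (dag_edges pa)"
    and f_pa: "\<And>i. depends_only_on (f i) (pa i)"
    and f_C2: "\<And>i. C2 (f i)"
    and sigma_pos: "\<sigma> > 0"
    and eps_gauss: "\<And>i. distributed M lborel (eps i) (\<lambda>t. ennreal (normal_density 0 \<sigma> t))"
    and eps_indep: "prob_space.indep_vars M (\<lambda>_. borel) eps UNIV"
    and X_rv: "X \<in> borel_measurable M"
    and anm: "\<And>\<omega> i. \<omega> \<in> space M \<Longrightarrow> X \<omega> $ i = f i (X \<omega>) + eps i \<omega>"
    and p_density: "distributed M lborel X (\<lambda>x. ennreal (p x))"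
    and p_cont: "continuous_on UNIV p"
    and sink: "\<And>i. l \<notin> pa i"
    and int_H: "\<And>j k. integrable M (\<lambda>\<omega>. - hess (\<lambda>y. ln (p y)) (X \<omega>) j k)"
    and int_SH: "\<And>j k. integrable M
        (\<lambda>\<omega>. schur l (\<lambda>a b. - hess (\<lambda>y. ln (p y)) (X \<omega>) a b) j k)"
    and int_g: "\<And>j. integrable M (\<lambda>\<omega>. pd (f l) j (X \<omega>))"
    and int_gg: "\<And>j k. integrable M (\<lambda>\<omega>. pd (f l) j (X \<omega>) * pd (f l) k (X \<omega>))"
  shows "\<forall>j k. j \<noteq> l \<longrightarrow> k \<noteq> l \<longrightarrow>
     (let H = (\<lambda>x a b. - hess (\<lambda>y. ln (p y)) x a b);
          E = (\<lambda>g. integral\<^sup>L M g);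
          Delta = E (\<lambda>\<omega>. schur l (H (X \<omega>)) j k)
                  - schur l (\<lambda>a b. E (\<lambda>\<omega>. H (X \<omega>) a b)) j k;
          Cov = E (\<lambda>\<omega>. pd (f l) j (X \<omega>) * pd (f l) k (X \<omega>))
                - E (\<lambda>\<omega>. pd (f l) j (X \<omega>)) * E (\<lambda>\<omega>. pd (f l) k (X \<omega>))
      in Delta = - (1 / \<sigma>\<^sup>2) * Cov)"
proof -
  interpret P: prob_space M by (rule prob)
  have diff: "\<And>i z. f i differentiable (at z)" and diff2: "\<And>i k z. pd (f i) k differentiable (at z)"
    using f_C2 unfolding C2_def by blast+
  have fc: "continuous_on UNIV (f i)" for i
    using diff by (auto intro!: differentiable_imp_continuous_on simp: differentiable_on_def)
  have fm: "f i \<in> borel_measurable borel" for i using fc by (rule borel_measurable_continuous_onI)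
  define q where "q v = (\<Prod>i\<in>UNIV. normal_density 0 \<sigma> (v$i - f i v))" for v :: "real^'n"
  have qpos: "q v > 0" for v unfolding q_def using sigma_pos by (auto intro!: prod_pos normal_density_pos)
  have compc: "continuous_on UNIV (\<lambda>v::real^'n. v $ i)" for i
    by (rule linear_continuous_on[OF bounded_linear_vec_nth])
  have qc: "continuous_on UNIV q" unfolding q_def normal_density_def
    using sigma_pos by (intro continuous_intros fc compc) auto
  have qbm[measurable]: "q \<in> borel_measurable borel" by (rule borel_measurable_continuous_onI[OF qc])
  have "distr M lborel X = density lborel (\<lambda>v. \<Prod>i\<in>UNIV. ennreal (normal_density 0 \<sigma> (v$i - f i v)))"
    by (rule X_density[OF prob dag f_pa fm eps_gauss eps_indep X_rv anm])
  also have "\<dots> = density lborel (\<lambda>v. ennreal (q v))"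
    unfolding q_def by (simp add: prod_ennreal)
  finally have Xq: "distr M lborel X = density lborel (\<lambda>v. ennreal (q v))" .
  have Xp: "distr M lborel X = density lborel (\<lambda>x. ennreal (p x))" and pm: "(\<lambda>x. ennreal (p x)) \<in> borel_measurable lborel"
    using p_density by (simp_all add: distributed_def)
  have qm: "(\<lambda>x. ennreal (q x)) \<in> borel_measurable lborel" by measurable
  have AE: "AE x in lborel. ennreal (p x) = ennreal (q x)"
    by (rule sigma_finite_measure.density_unique[OF lborel.sigma_finite_measure_axioms pm qm]) (use Xp Xq in simp)
  have "AE x in lborel. p x = q x" using AE
  proof eventually_elim
    fix x assume e: "ennreal (p x) = ennreal (q x)"
    show "p x = q x"
    proof (cases "p x \<ge> 0")
      case True then show ?thesis using e qpos[of x] by simp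
    next
      case False
      then have "ennreal (p x) = 0" by (simp add: ennreal_eq_0_iff)
      then show ?thesis using e qpos[of x] by (simp add: ennreal_eq_0_iff)
    qed
  qed
  then have "AE x in lebesgue. x \<in> {x. p x = q x}" by (intro AE_completion) simp
  then have peq: "p x = q x" for x
    using mem_closed_if_AE_lebesgue[OF closed_Collect_eq[OF p_cont qc]] by blast
  define K where "K = ln (1 / sqrt (2 * pi * \<sigma>\<^sup>2))"
  have lnd: "ln (normal_density 0 \<sigma> z) = K - z^2 / (2*\<sigma>^2)" for z
  proof -
    have pos: "1 / sqrt (2 * pi * \<sigma>\<^sup>2) > 0" using sigma_pos by simp
    have "ln (normal_density 0 \<sigma> z) = ln (1 / sqrt (2 * pi * \<sigma>\<^sup>2) * exp (-(z - 0)\<^sup>2 / (2 * \<sigma>\<^sup>2)))"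
      unfolding normal_density_def ..
    also have "\<dots> = ln (1 / sqrt (2 * pi * \<sigma>\<^sup>2)) + ln (exp (-(z - 0)\<^sup>2 / (2 * \<sigma>\<^sup>2)))"
      by (rule ln_mult_pos[OF pos exp_gt_zero])
    also have "\<dots> = K - z^2 / (2*\<sigma>^2)" unfolding K_def by simp
    finally show ?thesis .
  qed
  have lnp: "(\<lambda>y. ln (p y)) = (\<lambda>y. \<Sum>i\<in>UNIV. K - (y$i - f i y)^2 / (2*\<sigma>^2))"
  proof
    fix y
    have "ln (p y) = (\<Sum>i\<in>UNIV. ln (normal_density 0 \<sigma> (y$i - f i y)))"
      unfolding peq q_def by (rule ln_prod) (use sigma_pos normal_density_pos in \<open>auto simp: less_imp_neq[symmetric]\<close>)
    then show "ln (p y) = (\<Sum>i\<in>UNIV. K - (y$i - f i y)^2 / (2*\<sigma>^2))" by (simp add: lnd)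
  qed
  note hv = hess_vals[OF diff diff2 f_pa sink sigma_pos lnp]
  show ?thesis
  proof (intro allI impI)
    fix j k assume jl: "j \<noteq> l" and kl: "k \<noteq> l"
    define g where "g a \<omega> = pd (f l) a (X \<omega>)" for a \<omega>
    have s2: "\<sigma>^2 > 0" using sigma_pos by simp
    have Hll: "- hess (\<lambda>y. ln (p y)) x l l = 1/\<sigma>^2" for x using hv(1)[of x] by simp
    have Hjl: "- hess (\<lambda>y. ln (p y)) x j l = - pd (f l) j x / \<sigma>^2" for x using hv(2)[OF jl, of x] by simp
    have Hlk: "- hess (\<lambda>y. ln (p y)) x l k = - pd (f l) k x / \<sigma>^2" for x using hv(3)[OF kl, of x] by simp
    have sch: "schur l (\<lambda>a b. - hess (\<lambda>y. ln (p y)) (X \<omega>) a b) j k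
        = - hess (\<lambda>y. ln (p y)) (X \<omega>) j k - g j \<omega> * g k \<omega> / \<sigma>^2" for \<omega>
      unfolding schur_def Hll Hjl Hlk g_def using s2 by (simp add: field_simps power2_eq_square)
    have E1: "(\<integral>\<omega>. schur l (\<lambda>a b. - hess (\<lambda>y. ln (p y)) (X \<omega>) a b) j k \<partial>M)
        = (\<integral>\<omega>. - hess (\<lambda>y. ln (p y)) (X \<omega>) j k \<partial>M) - (\<integral>\<omega>. g j \<omega> * g k \<omega> \<partial>M) / \<sigma>^2"
      unfolding sch using int_H[of j k] int_gg[of j k] by (simp add: g_def)
    have Ell: "(\<integral>\<omega>. - hess (\<lambda>y. ln (p y)) (X \<omega>) l l \<partial>M) = 1/\<sigma>^2" by (simp add: Hll P.prob_space)
    have Ejl: "(\<integral>\<omega>. - hess (\<lambda>y. ln (p y)) (X \<omega>) j l \<partial>M) = - (\<integral>\<omega>. g j \<omega> \<partial>M) / \<sigma>^2"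
      by (simp add: Hjl g_def)
    have Elk: "(\<integral>\<omega>. - hess (\<lambda>y. ln (p y)) (X \<omega>) l k \<partial>M) = - (\<integral>\<omega>. g k \<omega> \<partial>M) / \<sigma>^2"
      by (simp add: Hlk g_def)
    have S2: "schur l (\<lambda>a b. \<integral>\<omega>. - hess (\<lambda>y. ln (p y)) (X \<omega>) a b \<partial>M) j k
        = (\<integral>\<omega>. - hess (\<lambda>y. ln (p y)) (X \<omega>) j k \<partial>M) - (\<integral>\<omega>. g j \<omega> \<partial>M) * (\<integral>\<omega>. g k \<omega> \<partial>M) / \<sigma>^2"
      unfolding schur_def Ell Ejl Elk using s2 by (simp add: field_simps power2_eq_square)
    show "let H = (\<lambda>x a b. - hess (\<lambda>y. ln (p y)) x a b);
          E = (\<lambda>g. integral\<^sup>L M g);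
          Delta = E (\<lambda>\<omega>. schur l (H (X \<omega>)) j k)
                  - schur l (\<lambda>a b. E (\<lambda>\<omega>. H (X \<omega>) a b)) j k;
          Cov = E (\<lambda>\<omega>. pd (f l) j (X \<omega>) * pd (f l) k (X \<omega>))
                - E (\<lambda>\<omega>. pd (f l) j (X \<omega>)) * E (\<lambda>\<omega>. pd (f l) k (X \<omega>))
      in Delta = - (1 / \<sigma>\<^sup>2) * Cov"
      unfolding Let_def E1[unfolded g_def] S2[unfolded g_def]
      using s2 by (simp add: field_simps)
  qed
qed


end
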